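(* Let $n\ge 4$ and $2\le t\le n-2$. If all of the following hold: (i) $\mathsf{var}(W_1(t))\,\mathsf{var}(W_2(t))\ne \mathsf{cov}(W_1(t),W_2(t))^2$; (ii) $\mathsf{var}(D_1(t))\,\mathsf{var}(D_2(t))\ne \mathsf{cov}(D_1(t),D_2(t))^2$; (iii) $\mathsf{var}(D_1(t)+D_2(t))\ne 0$; (iv) $\mathsf{var}(W_1(t)+W_2(t))\ne 0$, then the covariance matrix $\Sigma(t)=\mathsf{var}(\vec a(t))$ is invertible, so that the statistic $S(t)$ is well defined.
   Context: Let $G_1,\dots,G_n$ be a sequence of observations (networks) and let $K_1,K_2$ be two real symmetric $n\times n$ kernel matrices computed from this sequence, with $(i,j)$ entry $k_{xij}$ of $K_x$, $x\in\{1,2\}$. The permutation null distribution assigns probability $1/n!$ to each of the $n!$ permutations of the sequence, i.e. the kernel matrices $K_x$ are replaced by $(k_{x\pi(i)\pi(j)})_{i,j}$ for a uniformly random permutation $\pi$ of $\{1,\dots,n\}$ (the same $\pi$ for both kernels); $\mathsf{E},\mathsf{var},\mathsf{cov}$ denote expectation, variance and covariance under this distribution. For $x\in\{1,2\}$ define \[ \alpha_x(t)=\frac{1}{t(t-1)}\sum_{i=1}^n\sum_{j\ne i}k_{xij}\mathbb{1}\{i,j\le t\},\qquad \beta_x(t)=\frac{1}{(n-t)(n-t-1)}\sum_{i=1}^n\sum_{j\ne i}k_{xij}\mathbb{1}\{i,j> t\}, \] \[ W_x(t)=\frac{t}{n}\alpha_x(t)+\frac{n-t}{n}\beta_x(t),\qquad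 D_x(t)=\frac{t(t-1)}{n(n-1)}\alpha_x(t)-\frac{(n-t)(n-t-1)}{n(n-1)}\beta_x(t). \] Let $\vec a(t)=[\alpha_1(t),\beta_1(t),\alpha_2(t),\beta_2(t)]^{\mathsf T}$, $\Sigma(t)=\mathsf{var}(\vec a(t))$, and \[ S(t)=[\vec a(t)-\mathsf{E}\vec a(t)]^{\mathsf T}\Sigma(t)^{-1}[\vec a(t)-\mathsf{E}\vec a(t)]. \] *)

theory Defs
  imports "HOL-Analysis.Analysis" "HOL-Combinatorics.Permutations"
begin

text \<open>Observations are indexed 0..n-1 (paper: 1..n). A kernel matrix is a function
  K :: nat => nat => real, only its entries with indices < n matter.
  The permutation null distribution is the uniform distribution on the n! permutations
  of {0..<n}; a permutation p acts by replacing K i j with K (p i) (p j).\<close>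

definition perms :: "nat \<Rightarrow> (nat \<Rightarrow> nat) set" where
  "perms n = {p. p permutes {0..<n}}"

definition pE :: "nat \<Rightarrow> ((nat \<Rightarrow> nat) \<Rightarrow> real) \<Rightarrow> real" where
  "pE n f = (\<Sum>p\<in>perms n. f p) / fact n"

definition pcov :: "nat \<Rightarrow> ((nat \<Rightarrow> nat) \<Rightarrow> real) \<Rightarrow> ((nat \<Rightarrow> nat) \<Rightarrow> real) \<Rightarrow> real" where
  "pcov n f g = pE n (\<lambda>p. (f p - pE n f) * (g p - pE n g))"

definition pvar :: "nat \<Rightarrow> ((nat \<Rightarrow> nat) \<Rightarrow> real) \<Rightarrow> real" where
  "pvar n f = pcov n f f"

definition alpha :: "nat \<Rightarrow> (nat \<Rightarrow> nat \<Rightarrow> real) \<Rightarrow> nat \<Rightarrow> (nat \<Rightarrow> nat) \<Rightarrow> real" where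
  "alpha n K t p = (1 / (real t * (real t - 1))) *
     (\<Sum>i<n. \<Sum>j<n. if j \<noteq> i \<and> i < t \<and> j < t then K (p i) (p j) else 0)"

definition beta :: "nat \<Rightarrow> (nat \<Rightarrow> nat \<Rightarrow> real) \<Rightarrow> nat \<Rightarrow> (nat \<Rightarrow> nat) \<Rightarrow> real" where
  "beta n K t p = (1 / ((real n - real t) * (real n - real t - 1))) *
     (\<Sum>i<n. \<Sum>j<n. if j \<noteq> i \<and> t \<le> i \<and> t \<le> j then K (p i) (p j) else 0)"

definition Wstat :: "nat \<Rightarrow> (nat \<Rightarrow> nat \<Rightarrow> real) \<Rightarrow> nat \<Rightarrow> (nat \<Rightarrow> nat) \<Rightarrow> real" where
  "Wstat n K t p = real t / real n * alpha n K t p + (real n - real t) / real n * beta n K t p"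

definition Dstat :: "nat \<Rightarrow> (nat \<Rightarrow> nat \<Rightarrow> real) \<Rightarrow> nat \<Rightarrow> (nat \<Rightarrow> nat) \<Rightarrow> real" where
  "Dstat n K t p = real t * (real t - 1) / (real n * (real n - 1)) * alpha n K t p
     - (real n - real t) * (real n - real t - 1) / (real n * (real n - 1)) * beta n K t p"

definition avec :: "nat \<Rightarrow> (nat \<Rightarrow> nat \<Rightarrow> real) \<Rightarrow> (nat \<Rightarrow> nat \<Rightarrow> real) \<Rightarrow> nat \<Rightarrow> (nat \<Rightarrow> nat) \<Rightarrow> real^4" where
  "avec n K1 K2 t p = vector [alpha n K1 t p, beta n K1 t p, alpha n K2 t p, beta n K2 t p]"

definition Sigma_mat :: "nat \<Rightarrow> (nat \<Rightarrow> nat \<Rightarrow> real) \<Rightarrow> (nat \<Rightarrow> nat \<Rightarrow> real) \<Rightarrow> nat \<Rightarrow> real^4^4" where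
  "Sigma_mat n K1 K2 t = (\<chi> i j. pcov n (\<lambda>p. avec n K1 K2 t p $ i) (\<lambda>p. avec n K1 K2 t p $ j))"

end

theory Submission
  imports Defs
begin

lemma perm_lt: "s permutes {0..<n} \<Longrightarrow> (x::nat) < n \<Longrightarrow> s x < n"
  using permutes_in_image[of s "{0..<n}" x] by simp

lemma perm3:
  fixes a b c a' b' c' n :: nat
  assumes "a < n" "b < n" "c < n" "a' < n" "b' < n" "c' < n"
    "a \<noteq> b" "a \<noteq> c" "b \<noteq> c" "a' \<noteq> b'" "a' \<noteq> c'" "b' \<noteq> c'"
  shows "\<exists>s. s permutes {0..<n} \<and> s a' = a \<and> s b' = b \<and> s c' = c"
proof -
  define t1 where "t1 = Transposition.transpose a' a"
  define t2 where "t2 = Transposition.transpose (t1 b') b"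
  define t3 where "t3 = Transposition.transpose ((t2 \<circ> t1) c') c"
  have p1: "t1 permutes {0..<n}" unfolding t1_def using assms by (intro permutes_swap_id) auto
  have p2: "t2 permutes {0..<n}" unfolding t2_def using assms p1 by (intro permutes_swap_id) (auto intro: perm_lt)
  have p3: "t3 permutes {0..<n}" unfolding t3_def using assms p1 p2 by (intro permutes_swap_id) (auto intro: perm_lt)
  have i1: "inj t1" "inj t2" using p1 p2 permutes_inj by auto
  have "t1 a' = a" unfolding t1_def by simp
  moreover have "t1 b' \<noteq> a" using i1 assms \<open>t1 a' = a\<close> by (metis injD)
  moreover have "t2 (t1 b') = b" unfolding t2_def by simp
  moreover have "t2 a = a" unfolding t2_def using assms \<open>t1 b' \<noteq> a\<close> by (simp add: transpose_def)
  moreover have "t2 (t1 c') \<noteq> a" using i1 assms \<open>t1 a' = a\<close> \<open>t2 a = a\<close> by (metis injD)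
  moreover have "t2 (t1 c') \<noteq> b" using i1 assms \<open>t2 (t1 b') = b\<close> by (metis injD)
  ultimately have "(t3 \<circ> t2 \<circ> t1) a' = a \<and> (t3 \<circ> t2 \<circ> t1) b' = b \<and> (t3 \<circ> t2 \<circ> t1) c' = c"
    unfolding t3_def using assms by (auto simp: transpose_def)
  moreover have "(t3 \<circ> t2 \<circ> t1) permutes {0..<n}" using p1 p2 p3 by (intro permutes_compose)
  ultimately show ?thesis by blast
qed

lemma card_perms: "card (perms n) = fact n"
  unfolding perms_def by (rule card_permutations) auto

lemma fin_perms: "finite (perms n)"
  unfolding perms_def by (simp add: finite_permutations)

lemma pE_const: "pE n (\<lambda>p. c) = c"
  unfolding pE_def by (simp add: card_perms)

lemma pE_cong: "(\<And>p. p \<in> perms n \<Longrightarrow> f p = g p) \<Longrightarrow> pE n f = pE n g"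
  unfolding pE_def by (simp cong: sum.cong)

lemma pE_add: "pE n (\<lambda>p. f p + g p) = pE n f + pE n g"
  unfolding pE_def by (simp add: sum.distrib add_divide_distrib)

lemma pE_diff: "pE n (\<lambda>p. f p - g p) = pE n f - pE n g"
  unfolding pE_def by (simp add: sum_subtractf diff_divide_distrib)

lemma pE_scale: "pE n (\<lambda>p. c * f p) = c * pE n f"
  unfolding pE_def by (simp add: sum_distrib_left)

lemma pE_sum: "pE n (\<lambda>p. \<Sum>i\<in>I. f i p) = (\<Sum>i\<in>I. pE n (f i))"
  unfolding pE_def by (simp add: sum.swap[of _ I] sum_divide_distrib)

lemma pcov_alt: "pcov n f g = pE n (\<lambda>p. f p * g p) - pE n f * pE n g"
proof -
  have "pcov n f g = pE n (\<lambda>p. f p * g p) - pE n (\<lambda>p. pE n g * f p) - pE n (\<lambda>p. pE n f * g p) + pE n (\<lambda>p. pE n f * pE n g)"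
    unfolding pcov_def by (simp add: pE_add[symmetric] pE_diff[symmetric] algebra_simps)
  then show ?thesis by (simp add: pE_scale pE_const)
qed

lemma pcov_sym: "pcov n f g = pcov n g f"
  unfolding pcov_alt by (simp add: mult.commute)

lemma pcov_cong: "(\<And>p. p \<in> perms n \<Longrightarrow> f p = f' p) \<Longrightarrow> (\<And>p. p \<in> perms n \<Longrightarrow> g p = g' p) \<Longrightarrow> pcov n f g = pcov n f' g'"
  unfolding pcov_alt by (metis (no_types, lifting) pE_cong)

lemma pcov_add_right: "pcov n f (\<lambda>p. g p + h p) = pcov n f g + pcov n f h"
  unfolding pcov_alt by (simp add: distrib_left pE_add algebra_simps)

lemma pcov_scale_right: "pcov n f (\<lambda>p. c * g p) = c * pcov n f g"
  unfolding pcov_alt by (simp add: pE_scale algebra_simps)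

lemma pcov_sum_right: "pcov n f (\<lambda>p. \<Sum>i\<in>I. g i p) = (\<Sum>i\<in>I. pcov n f (g i))"
  unfolding pcov_alt by (simp add: sum_distrib_left pE_sum sum_subtractf)

lemma pcov_add_left: "pcov n (\<lambda>p. g p + h p) f = pcov n g f + pcov n h f"
  using pcov_add_right pcov_sym by metis

lemma pcov_scale_left: "pcov n (\<lambda>p. c * g p) f = c * pcov n g f"
  using pcov_scale_right pcov_sym by metis

lemma pcov_sum_left: "pcov n (\<lambda>p. \<Sum>i\<in>I. g i p) f = (\<Sum>i\<in>I. pcov n (g i) f)"
  by (subst pcov_sym, subst pcov_sum_right, simp add: pcov_sym)

lemma pcov_const_right: "(\<And>p. p \<in> perms n \<Longrightarrow> g p = c) \<Longrightarrow> pcov n f g = 0"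
proof -
  assume "\<And>p. p \<in> perms n \<Longrightarrow> g p = c"
  then have "pcov n f g = pcov n f (\<lambda>p. c * 1)" by (intro pcov_cong) auto
  also have "\<dots> = 0" unfolding pcov_scale_right by (simp add: pcov_alt pE_const)
  finally show ?thesis .
qed

lemma pE_perm_inv:
  assumes "s permutes {0..<n}"
  shows "pE n (\<lambda>p. F (p \<circ> s)) = pE n F"
  unfolding pE_def perms_def using sum_permutations_compose_right[OF assms, of F] by simp

lemma pcov_perm_inv:
  assumes "s permutes {0..<n}"
  shows "pcov n (\<lambda>p. F (p \<circ> s)) (\<lambda>p. G (p \<circ> s)) = pcov n F G"
  unfolding pcov_alt using pE_perm_inv[OF assms, of "\<lambda>p. F p * G p"] pE_perm_inv[OF assms, of F]
    pE_perm_inv[OF assms, of G] by simp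

lemma sum_two_pts:
  fixes u :: "nat \<Rightarrow> real"
  assumes "i \<noteq> j" "i < n" "j < n"
  shows "(\<Sum>k<n. u k * (if k = i \<or> k = j then a else b)) = b * (\<Sum>k<n. u k) + (u i + u j) * (a - b)"
proof -
  have "(\<Sum>k<n. u k * (if k = i \<or> k = j then a else b)) =
     (\<Sum>k<n. b * u k + (if k = i then u k * (a - b) else 0) + (if k = j then u k * (a - b) else 0))"
    using assms by (intro sum.cong) (auto simp: algebra_simps)
  also have "\<dots> = b * (\<Sum>k<n. u k) + (u i + u j) * (a - b)"
    using assms by (simp add: sum.distrib sum_distrib_left algebra_simps)
  finally show ?thesis .
qed

lemma eps_sum:
  assumes "t \<le> n"
  shows "(\<Sum>k<n. (if k < t then 1 else -1 :: real)) = 2 * real t - real n"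
proof -
  have "{..<n} = {..<t} \<union> {t..<n}" using assms by auto
  then have "(\<Sum>k<n. (if k < t then 1 else -1 :: real)) = (\<Sum>k<t. (if k < t then 1 else -1 :: real)) + (\<Sum>k\<in>{t..<n}. (if k < t then 1 else -1 :: real))"
    by (simp add: sum.union_disjoint ivl_disj_int)
  also have "\<dots> = real t - real (n - t)" by simp
  finally show ?thesis using assms by simp
qed

lemma countA:
  assumes "t \<le> n"
  shows "(\<Sum>i<n. \<Sum>j<n. if j \<noteq> i \<and> i < t \<and> j < t then X else 0) = real t * (real t - 1) * (X::real)"
proof -
  have "(\<Sum>j<n. if j \<noteq> i \<and> i < t \<and> j < t then X else 0) = (if i < t then (real t - 1) * X else 0)" for i
  proof (cases "i < t")
    case True
    have "(\<Sum>j<n. if j \<noteq> i \<and> i < t \<and> j < t then X else 0) = (\<Sum>j\<in>{j\<in>{..<n}. j \<noteq> i \<and> i < t \<and> j < t}. X)"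
      by (subst sum.inter_filter) auto
    also have "{j\<in>{..<n}. j \<noteq> i \<and> i < t \<and> j < t} = {..<t} - {i}" using True assms by auto
    finally show ?thesis using True by (simp add: of_nat_diff)
  qed simp
  then have "(\<Sum>i<n. \<Sum>j<n. if j \<noteq> i \<and> i < t \<and> j < t then X else 0) = (\<Sum>i<n. if i < t then (real t - 1) * X else 0)"
    by simp
  also have "\<dots> = (\<Sum>i\<in>{i\<in>{..<n}. i < t}. (real t - 1) * X)" by (subst sum.inter_filter) auto
  also have "{i\<in>{..<n}. i < t} = {..<t}" using assms by auto
  finally show ?thesis by simp
qed

lemma countB:
  assumes "t \<le> n"
  shows "(\<Sum>i<n. \<Sum>j<n. if j \<noteq> i \<and> t \<le> i \<and> t \<le> j then X else 0) = (real n - real t) * (real n - real t - 1) * (X::real)"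
proof -
  have "(\<Sum>j<n. if j \<noteq> i \<and> t \<le> i \<and> t \<le> j then X else 0) = (if t \<le> i \<and> i < n then (real n - real t - 1) * X else 0)" if "i < n" for i
  proof (cases "t \<le> i")
    case True
    have "(\<Sum>j<n. if j \<noteq> i \<and> t \<le> i \<and> t \<le> j then X else 0) = (\<Sum>j\<in>{j\<in>{..<n}. j \<noteq> i \<and> t \<le> i \<and> t \<le> j}. X)"
      by (subst sum.inter_filter) auto
    also have "{j\<in>{..<n}. j \<noteq> i \<and> t \<le> i \<and> t \<le> j} = {t..<n} - {i}" using True assms by auto
    finally show ?thesis using True assms that by (simp add: of_nat_diff)
  qed simp
  then have "(\<Sum>i<n. \<Sum>j<n. if j \<noteq> i \<and> t \<le> i \<and> t \<le> j then X else 0) = (\<Sum>i<n. if t \<le> i \<and> i < n then (real n - real t - 1) * X else 0)"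
    by (intro sum.cong) auto
  also have "\<dots> = (\<Sum>i\<in>{i\<in>{..<n}. t \<le> i \<and> i < n}. (real n - real t - 1) * X)" by (subst sum.inter_filter) auto
  also have "{i\<in>{..<n}. t \<le> i \<and> i < n} = {t..<n}" using assms by auto
  finally show ?thesis using assms by (simp add: of_nat_diff algebra_simps)
qed

lemma cancel_aux: "(b::real) \<noteq> 0 \<Longrightarrow> a * (1 / b) * (b * X) = a * X"
  by simp

lemma covWG:
  fixes Kx :: "nat \<Rightarrow> nat \<Rightarrow> real" and g :: "nat \<Rightarrow> real"
  assumes n: "4 \<le> n" "2 \<le> t" "t \<le> n - 2" and sym: "\<forall>i<n. \<forall>j<n. Kx i j = Kx j i"
  shows "pcov n (Wstat n Kx t) (\<lambda>p. \<Sum>k<n. (if k < t then 1 else -1) * g (p k)) = 0"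
proof -
  define eps where "eps k = (if k < t then 1 else -1 :: real)" for k
  define G where "G p = (\<Sum>k<n. eps k * g (p k))" for p :: "nat \<Rightarrow> nat"
  define c where "c i j k = pcov n (\<lambda>p. Kx (p i) (p j)) (\<lambda>p. g (p k))" for i j k
  define c2 where "c2 = c 0 1 0"
  define c3 where "c3 = c 0 1 2"
  have F3: "c i j k = c3" if H: "i<n" "j<n" "k<n" "i\<noteq>j" "i\<noteq>k" "j\<noteq>k" for i j k
  proof -
    obtain s where s: "s permutes {0..<n}" "s 0 = i" "s 1 = j" "s 2 = k"
      using perm3[of i n j k 0 1 2] H n by auto
    have "c3 = pcov n (\<lambda>p. (\<lambda>q. Kx (q 0) (q 1)) (p \<circ> s)) (\<lambda>p. (\<lambda>q. g (q 2)) (p \<circ> s))"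
      unfolding c3_def c_def by (rule pcov_perm_inv[OF s(1), symmetric])
    also have "\<dots> = c i j k" unfolding c_def using s by simp
    finally show ?thesis by simp
  qed
  have F2: "c i j i = c2" if H: "i<n" "j<n" "i\<noteq>j" for i j
  proof -
    define k where "k = (if 0 \<noteq> i \<and> 0 \<noteq> j then 0 else if 1 \<noteq> i \<and> 1 \<noteq> j then 1 else (2::nat))"
    have k: "k < n" "k \<noteq> i" "k \<noteq> j" using n H unfolding k_def by auto
    obtain s where s: "s permutes {0..<n}" "s 0 = i" "s 1 = j" "s 2 = k"
      using perm3[of i n j k 0 1 2] H n k by auto
    have "c2 = pcov n (\<lambda>p. (\<lambda>q. Kx (q 0) (q 1)) (p \<circ> s)) (\<lambda>p. (\<lambda>q. g (q 0)) (p \<circ> s))"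
      unfolding c2_def c_def by (rule pcov_perm_inv[OF s(1), symmetric])
    also have "\<dots> = c i j i" unfolding c_def using s by simp
    finally show ?thesis by simp
  qed
  have F2': "c i j j = c2" if "i<n" "j<n" "i\<noteq>j" for i j
  proof -
    have "c i j j = c j i j" unfolding c_def
    proof (rule pcov_cong)
      fix p assume "p \<in> perms n"
      then have "p permutes {0..<n}" by (simp add: perms_def)
      then show "Kx (p i) (p j) = Kx (p j) (p i)" using sym perm_lt that by blast
    qed simp
    then show ?thesis using F2 that by simp
  qed
  have Fsum: "2 * c2 = - (real n - 2) * c3"
  proof -
    have "(\<Sum>k<n. c 0 1 k) = pcov n (\<lambda>p. Kx (p 0) (p 1)) (\<lambda>p. \<Sum>k<n. g (p k))"
      unfolding c_def by (rule pcov_sum_right[symmetric])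
    also have "\<dots> = 0"
    proof (rule pcov_const_right)
      fix p assume "p \<in> perms n"
      then have "p permutes {..<n}" by (simp add: perms_def atLeast0LessThan)
      then show "(\<Sum>k<n. g (p k)) = (\<Sum>k<n. g k)" using sum.permute[of p "{..<n}" g] by (simp add: comp_def)
    qed
    finally have "(\<Sum>k<n. c 0 1 k) = 0" .
    moreover have "(\<Sum>k<n. c 0 1 k) = (\<Sum>k<n. 1 * (if k = 0 \<or> k = 1 then c2 else c3))"
    proof (intro sum.cong refl)
      fix k assume "k \<in> {..<n}"
      then show "c 0 1 k = 1 * (if k = 0 \<or> k = 1 then c2 else c3)"
        using F3[of 0 1 k] F2'[of 0 1] n unfolding c2_def by auto
    qed
    moreover have "\<dots> = c3 * real n + 2 * (c2 - c3)" using sum_two_pts[of 0 1 n "\<lambda>_. 1" c2 c3] n by simp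
    ultimately show ?thesis by (simp add: algebra_simps)
  qed
  have rowA: "(\<Sum>k<n. eps k * c i j k) = (2 * real t - 2 * real n) * c3" if "i<t" "j<t" "i\<noteq>j" for i j
  proof -
    have "(\<Sum>k<n. eps k * c i j k) = (\<Sum>k<n. eps k * (if k = i \<or> k = j then c2 else c3))"
      using F3[of i j] F2[of i j] F2'[of i j] that n by (intro sum.cong) auto
    also have "\<dots> = c3 * (2 * real t - real n) + (eps i + eps j) * (c2 - c3)"
      using sum_two_pts[of i j n eps c2 c3] eps_sum[of t n] that n unfolding eps_def by simp
    also have "\<dots> = (2 * real t - 2 * real n) * c3" using that Fsum unfolding eps_def by (simp add: algebra_simps)
    finally show ?thesis .
  qed
  have rowB: "(\<Sum>k<n. eps k * c i j k) = (2 * real t) * c3" if "t\<le>i" "t\<le>j" "i<n" "j<n" "i\<noteq>j" for i j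
  proof -
    have "(\<Sum>k<n. eps k * c i j k) = (\<Sum>k<n. eps k * (if k = i \<or> k = j then c2 else c3))"
      using F3[of i j] F2[of i j] F2'[of i j] that n by (intro sum.cong) auto
    also have "\<dots> = c3 * (2 * real t - real n) + (eps i + eps j) * (c2 - c3)"
      using sum_two_pts[of i j n eps c2 c3] eps_sum[of t n] that n unfolding eps_def by simp
    also have "\<dots> = (2 * real t) * c3" using that Fsum unfolding eps_def by (simp add: algebra_simps)
    finally show ?thesis .
  qed
  define SA where "SA p = (\<Sum>i<n. \<Sum>j<n. if j \<noteq> i \<and> i < t \<and> j < t then Kx (p i) (p j) else 0)" for p :: "nat \<Rightarrow> nat"
  define SB where "SB p = (\<Sum>i<n. \<Sum>j<n. if j \<noteq> i \<and> t \<le> i \<and> t \<le> j then Kx (p i) (p j) else 0)" for p :: "nat \<Rightarrow> nat"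
  have covSA: "pcov n SA G = real t * (real t - 1) * ((2 * real t - 2 * real n) * c3)"
  proof -
    have "SA = (\<lambda>p. \<Sum>i<n. \<Sum>j<n. (if j \<noteq> i \<and> i < t \<and> j < t then 1 else 0) * Kx (p i) (p j))"
      unfolding SA_def by (intro ext sum.cong) auto
    then have "pcov n SA G = (\<Sum>i<n. \<Sum>j<n. (if j \<noteq> i \<and> i < t \<and> j < t then 1 else 0) * pcov n (\<lambda>p. Kx (p i) (p j)) G)"
      by (simp add: pcov_sum_left pcov_scale_left)
    also have "\<dots> = (\<Sum>i<n. \<Sum>j<n. (if j \<noteq> i \<and> i < t \<and> j < t then 1 else 0) * (\<Sum>k<n. eps k * c i j k))"
      unfolding G_def c_def by (simp add: pcov_sum_right pcov_scale_right)
    also have "\<dots> = (\<Sum>i<n. \<Sum>j<n. if j \<noteq> i \<and> i < t \<and> j < t then (2 * real t - 2 * real n) * c3 else 0)"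
      using rowA by (intro sum.cong) auto
    also have "\<dots> = real t * (real t - 1) * ((2 * real t - 2 * real n) * c3)"
      by (rule countA) (use n in auto)
    finally show ?thesis .
  qed
  have covSB: "pcov n SB G = (real n - real t) * (real n - real t - 1) * ((2 * real t) * c3)"
  proof -
    have "SB = (\<lambda>p. \<Sum>i<n. \<Sum>j<n. (if j \<noteq> i \<and> t \<le> i \<and> t \<le> j then 1 else 0) * Kx (p i) (p j))"
      unfolding SB_def by (intro ext sum.cong) auto
    then have "pcov n SB G = (\<Sum>i<n. \<Sum>j<n. (if j \<noteq> i \<and> t \<le> i \<and> t \<le> j then 1 else 0) * pcov n (\<lambda>p. Kx (p i) (p j)) G)"
      by (simp add: pcov_sum_left pcov_scale_left)
    also have "\<dots> = (\<Sum>i<n. \<Sum>j<n. (if j \<noteq> i \<and> t \<le> i \<and> t \<le> j then 1 else 0) * (\<Sum>k<n. eps k * c i j k))"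
      unfolding G_def c_def by (simp add: pcov_sum_right pcov_scale_right)
    also have "\<dots> = (\<Sum>i<n. \<Sum>j<n. if j \<noteq> i \<and> t \<le> i \<and> t \<le> j then (2 * real t) * c3 else 0)"
      using rowB by (intro sum.cong) auto
    also have "\<dots> = (real n - real t) * (real n - real t - 1) * ((2 * real t) * c3)"
      by (rule countB) (use n in auto)
    finally show ?thesis .
  qed
  have W: "Wstat n Kx t = (\<lambda>p. (real t / real n * (1 / (real t * (real t - 1)))) * SA p
      + ((real n - real t) / real n * (1 / ((real n - real t) * (real n - real t - 1)))) * SB p)"
    unfolding Wstat_def alpha_def beta_def SA_def SB_def by (simp add: fun_eq_iff)
  have "pcov n (Wstat n Kx t) G = (real t / real n * (1 / (real t * (real t - 1)))) * pcov n SA G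
      + ((real n - real t) / real n * (1 / ((real n - real t) * (real n - real t - 1)))) * pcov n SB G"
    unfolding W by (simp add: pcov_add_left pcov_scale_left)
  also have "\<dots> = 0"
  proof -
    have "real t - 1 \<noteq> 0" "real t \<noteq> 0" "real n - real t \<noteq> 0" "real n - real t - 1 \<noteq> 0" "real n \<noteq> 0"
      using n by auto
    then have h12: "(real t / real n * (1 / (real t * (real t - 1)))) * pcov n SA G = real t * (2 * real t - 2 * real n) * c3 / real n"
      "((real n - real t) / real n * (1 / ((real n - real t) * (real n - real t - 1)))) * pcov n SB G
       = (real n - real t) * (2 * real t) * c3 / real n"
      unfolding covSA covSB using cancel_aux[of "real t * (real t - 1)"] cancel_aux[of "(real n - real t) * (real n - real t - 1)"]
      by simp_all
    have e: "real t * (2 * real t - 2 * real n) * c3 + (real n - real t) * (2 * real t) * c3 = 0"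
      by (simp add: algebra_simps)
    show ?thesis unfolding h12 add_divide_distrib[symmetric] e by simp
  qed
  finally show ?thesis unfolding G_def eps_def .
qed

lemma antisym_sum:
  fixes M K :: "nat \<Rightarrow> nat \<Rightarrow> real"
  assumes "\<And>i j. M j i = - M i j" "\<And>i j. i < n \<Longrightarrow> j < n \<Longrightarrow> K j i = K i j"
  shows "(\<Sum>i<n. \<Sum>j<n. M i j * K i j) = 0"
proof -
  have "(\<Sum>i<n. \<Sum>j<n. M i j * K i j) = (\<Sum>j<n. \<Sum>i<n. M i j * K i j)" by (rule sum.swap)
  also have "\<dots> = (\<Sum>j<n. \<Sum>i<n. - (M j i * K j i))"
  proof (intro sum.cong refl)
    fix i j assume "j \<in> {..<n}" "i \<in> {..<n}"
    then have "M i j = - M j i" "K i j = K j i" using assms(1)[of j i] assms(2)[of i j] by auto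
    then show "M i j * K i j = - (M j i * K j i)" by simp
  qed
  also have "\<dots> = - (\<Sum>i<n. \<Sum>j<n. M i j * K i j)" by (simp add: sum_negf)
  finally show ?thesis by simp
qed

lemma cancel2: "(a::real) \<noteq> 0 \<Longrightarrow> b \<noteq> 0 \<Longrightarrow> a / d * (1 / a) * x - b / d * (1 / b) * y = 1 / d * (x - y)"
  by (simp add: diff_divide_distrib)

lemma D_repr:
  fixes Ky :: "nat \<Rightarrow> nat \<Rightarrow> real"
  assumes n: "4 \<le> n" "2 \<le> t" "t \<le> n - 2" and sym: "\<forall>i<n. \<forall>j<n. Ky i j = Ky j i"
    and p: "p \<in> perms n"
  shows "Dstat n Ky t p = (1 / (real n * (real n - 1))) *
     (\<Sum>k<n. (if k < t then 1 else -1) * (\<Sum>b<n. if b \<noteq> p k then Ky (p k) b else 0))"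
proof -
  define eps where "eps k = (if k < t then 1 else -1 :: real)" for k
  define SA where "SA = (\<Sum>i<n. \<Sum>j<n. if j \<noteq> i \<and> i < t \<and> j < t then Ky (p i) (p j) else 0)"
  define SB where "SB = (\<Sum>i<n. \<Sum>j<n. if j \<noteq> i \<and> t \<le> i \<and> t \<le> j then Ky (p i) (p j) else 0)"
  have pp: "p permutes {..<n}" using p by (simp add: perms_def atLeast0LessThan)
  have inj: "inj p" using pp permutes_inj by blast
  have plt: "p i < n" if "i < n" for i using pp that permutes_in_image[OF pp] by simp
  have row: "(\<Sum>b<n. if b \<noteq> p k then Ky (p k) b else 0) = (\<Sum>j<n. if j \<noteq> k then Ky (p k) (p j) else 0)" for k
  proof -
    have "(\<Sum>b<n. if b \<noteq> p k then Ky (p k) b else 0) = (\<Sum>j<n. if p j \<noteq> p k then Ky (p k) (p j) else 0)"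
      using sum.permute[OF pp, of "\<lambda>b. if b \<noteq> p k then Ky (p k) b else 0"] by (simp add: comp_def)
    also have "\<dots> = (\<Sum>j<n. if j \<noteq> k then Ky (p k) (p j) else 0)" using inj by (simp add: inj_eq)
    finally show ?thesis .
  qed
  define M where "M i j = (if j \<noteq> i then eps i else 0) - ((if j \<noteq> i \<and> i < t \<and> j < t then 1 else 0) - (if j \<noteq> i \<and> t \<le> i \<and> t \<le> j then 1 else 0))" for i j
  have Mas: "M j i = - M i j" for i j unfolding M_def eps_def by auto
  have "(\<Sum>i<n. \<Sum>j<n. M i j * Ky (p i) (p j)) = 0"
    by (rule antisym_sum[OF Mas]) (use sym plt in auto)
  moreover have "(\<Sum>i<n. \<Sum>j<n. M i j * Ky (p i) (p j)) = (\<Sum>k<n. eps k * (\<Sum>b<n. if b \<noteq> p k then Ky (p k) b else 0)) - (SA - SB)"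
  proof -
    have "(\<Sum>i<n. \<Sum>j<n. M i j * Ky (p i) (p j)) = (\<Sum>i<n. \<Sum>j<n. (eps i * (if j \<noteq> i then Ky (p i) (p j) else 0)
        - (if j \<noteq> i \<and> i < t \<and> j < t then Ky (p i) (p j) else 0)) + (if j \<noteq> i \<and> t \<le> i \<and> t \<le> j then Ky (p i) (p j) else 0))"
      unfolding M_def by (intro sum.cong refl) (simp add: algebra_simps)
    also have "\<dots> = (\<Sum>i<n. eps i * (\<Sum>j<n. if j \<noteq> i then Ky (p i) (p j) else 0)) - SA + SB"
      unfolding SA_def SB_def by (simp only: sum.distrib sum_subtractf sum_distrib_left)
    finally show ?thesis unfolding row by simp
  qed
  ultimately have key: "SA - SB = (\<Sum>k<n. eps k * (\<Sum>b<n. if b \<noteq> p k then Ky (p k) b else 0))" by simp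
  have "Dstat n Ky t p = (real t * (real t - 1) / (real n * (real n - 1)) * (1 / (real t * (real t - 1)))) * SA
     - ((real n - real t) * (real n - real t - 1) / (real n * (real n - 1)) * (1 / ((real n - real t) * (real n - real t - 1)))) * SB"
    unfolding Dstat_def alpha_def beta_def SA_def SB_def by simp
  also have "\<dots> = (1 / (real n * (real n - 1))) * (SA - SB)"
  proof -
    have "real t * (real t - 1) \<noteq> 0" "(real n - real t) * (real n - real t - 1) \<noteq> 0" "real n * (real n - 1) \<noteq> 0" using n by auto
    then show ?thesis using cancel2 by blast
  qed
  finally show ?thesis unfolding key eps_def .
qed

lemma covWD:
  fixes Kx Ky :: "nat \<Rightarrow> nat \<Rightarrow> real"
  assumes n: "4 \<le> n" "2 \<le> t" "t \<le> n - 2" and symx: "\<forall>i<n. \<forall>j<n. Kx i j = Kx j i"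
    and symy: "\<forall>i<n. \<forall>j<n. Ky i j = Ky j i"
  shows "pcov n (Wstat n Kx t) (Dstat n Ky t) = 0"
proof -
  have "pcov n (Wstat n Kx t) (Dstat n Ky t) = pcov n (Wstat n Kx t) (\<lambda>p. (1 / (real n * (real n - 1))) *
     (\<Sum>k<n. (if k < t then 1 else -1) * (\<lambda>a. \<Sum>b<n. if b \<noteq> a then Ky a b else 0) (p k)))"
    by (rule pcov_cong) (use D_repr[OF n symy] in auto)
  also have "\<dots> = 0" unfolding pcov_scale_right using covWG[OF n symx, of "\<lambda>a. \<Sum>b<n. if b \<noteq> a then Ky a b else 0"] by simp
  finally show ?thesis .
qed

lemma lin2:
  fixes x y a b c :: real
  assumes "x * a + y * b = 0" "x * b + y * c = 0" "a * c \<noteq> b\<^sup>2"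
  shows "x = 0 \<and> y = 0"
proof -
  have "x * (a * c - b\<^sup>2) = c * (x * a + y * b) - b * (x * b + y * c)" by (simp add: algebra_simps power2_eq_square)
  then have "x * (a * c - b\<^sup>2) = 0" using assms by simp
  moreover have "y * (a * c - b\<^sup>2) = a * (x * b + y * c) - b * (x * a + y * b)" by (simp add: algebra_simps power2_eq_square)
  then have "y * (a * c - b\<^sup>2) = 0" using assms by simp
  ultimately show ?thesis using assms(3) by simp
qed

lemma change_basis:
  fixes A B C E v1 v2 al be :: real
  assumes "A * E + B * C \<noteq> 0"
  shows "v1 * al + v2 * be = ((v1 * E + v2 * C) / (A * E + B * C)) * (A * al + B * be)
     + ((v1 * B - v2 * A) / (A * E + B * C)) * (C * al - E * be)"
proof -
  have num: "(v1 * E + v2 * C) * (A * al + B * be) + (v1 * B - v2 * A) * (C * al - E * be) = (A * E + B * C) * (v1 * al + v2 * be)"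
    by (simp add: algebra_simps)
  have "((v1 * E + v2 * C) / (A * E + B * C)) * (A * al + B * be)
     + ((v1 * B - v2 * A) / (A * E + B * C)) * (C * al - E * be) =
     ((v1 * E + v2 * C) * (A * al + B * be) + (v1 * B - v2 * A) * (C * al - E * be)) / (A * E + B * C)"
    by (metis add_divide_distrib times_divide_eq_left)
  also have "\<dots> = v1 * al + v2 * be" unfolding num using assms by simp
  finally show ?thesis by simp
qed

lemma vector_4':
 "(vector [x,y,z,w] ::('a::zero)^4)$1 = x"
 "(vector [x,y,z,w] ::('a::zero)^4)$2 = y"
 "(vector [x,y,z,w] ::('a::zero)^4)$3 = z"
 "(vector [x,y,z,w] ::('a::zero)^4)$4 = w"
  unfolding vector_def by simp_all

lemma pcov_diff_left: "pcov n (\<lambda>p. g p - h p) f = pcov n g f - pcov n h f"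
  unfolding pcov_alt by (simp add: left_diff_distrib pE_diff algebra_simps)

theorem theorem2:
  fixes K1 K2 :: "nat \<Rightarrow> nat \<Rightarrow> real" and n t :: nat
  assumes "4 \<le> n" and "2 \<le> t" and "t \<le> n - 2"
    and "\<forall>i<n. \<forall>j<n. K1 i j = K1 j i"
    and "\<forall>i<n. \<forall>j<n. K2 i j = K2 j i"
    and "pvar n (Wstat n K1 t) * pvar n (Wstat n K2 t) \<noteq> (pcov n (Wstat n K1 t) (Wstat n K2 t))\<^sup>2"
    and "pvar n (Dstat n K1 t) * pvar n (Dstat n K2 t) \<noteq> (pcov n (Dstat n K1 t) (Dstat n K2 t))\<^sup>2"
    and "pvar n (\<lambda>p. Dstat n K1 t p + Dstat n K2 t p) \<noteq> 0"
    and "pvar n (\<lambda>p. Wstat n K1 t p + Wstat n K2 t p) \<noteq> 0"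
  shows "invertible (Sigma_mat n K1 K2 t)"
proof -
  note n = assms(1-3)
  define A where "A = real t / real n"
  define B where "B = (real n - real t) / real n"
  define C where "C = real t * (real t - 1) / (real n * (real n - 1))"
  define E where "E = (real n - real t) * (real n - real t - 1) / (real n * (real n - 1))"
  have pos: "A > 0" "B > 0" "C > 0" "E > 0" unfolding A_def B_def C_def E_def using n by auto
  then have Dnz: "A * E + B * C \<noteq> 0" by (smt (verit) mult_pos_pos)
  define Dl where "Dl = A * E + B * C"
  define W1 where "W1 = Wstat n K1 t"
  define W2 where "W2 = Wstat n K2 t"
  define D1 where "D1 = Dstat n K1 t"
  define D2 where "D2 = Dstat n K2 t"
  have W1e: "W1 p = A * alpha n K1 t p + B * beta n K1 t p" for p unfolding W1_def Wstat_def A_def B_def by simp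
  have W2e: "W2 p = A * alpha n K2 t p + B * beta n K2 t p" for p unfolding W2_def Wstat_def A_def B_def by simp
  have D1e: "D1 p = C * alpha n K1 t p - E * beta n K1 t p" for p unfolding D1_def Dstat_def C_def E_def by simp
  have D2e: "D2 p = C * alpha n K2 t p - E * beta n K2 t p" for p unfolding D2_def Dstat_def C_def E_def by simp
  have cWD: "pcov n W1 D1 = 0" "pcov n W1 D2 = 0" "pcov n W2 D1 = 0" "pcov n W2 D2 = 0"
    unfolding W1_def W2_def D1_def D2_def using covWD[OF n] assms(4,5) by auto
  have "\<exists>B. B ** Sigma_mat n K1 K2 t = mat 1"
    unfolding matrix_left_invertible_ker
  proof (intro allI impI)
    fix v :: "real^4" assume v: "Sigma_mat n K1 K2 t *v v = 0"
    define a where "a i p = avec n K1 K2 t p $ i" for i p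
    define L where "L p = (\<Sum>j\<in>UNIV. v $ j * a j p)" for p
    have cL: "pcov n (a i) L = 0" for i
    proof -
      have "0 = (Sigma_mat n K1 K2 t *v v) $ i" using v by simp
      also have "\<dots> = (\<Sum>j\<in>UNIV. pcov n (a i) (a j) * v $ j)"
        unfolding matrix_vector_mult_def Sigma_mat_def a_def by simp
      also have "\<dots> = pcov n (a i) L"
        unfolding L_def pcov_sum_right pcov_scale_right by (simp add: mult.commute)
      finally show ?thesis by simp
    qed
    have a1: "a 1 = alpha n K1 t" "a 2 = beta n K1 t" "a 3 = alpha n K2 t" "a 4 = beta n K2 t"
      unfolding a_def avec_def by (auto simp: vector_4')
    have cL4: "pcov n (alpha n K1 t) L = 0" "pcov n (beta n K1 t) L = 0"
       "pcov n (alpha n K2 t) L = 0" "pcov n (beta n K2 t) L = 0"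
      using cL[of 1] cL[of 2] cL[of 3] cL[of 4] unfolding a1 by auto
    have cW1: "pcov n W1 L = 0" unfolding W1e by (simp add: pcov_add_left pcov_scale_left cL4)
    have cW2: "pcov n W2 L = 0" unfolding W2e by (simp add: pcov_add_left pcov_scale_left cL4)
    have cD1: "pcov n D1 L = 0" unfolding D1e by (simp add: pcov_diff_left pcov_scale_left cL4)
    have cD2: "pcov n D2 L = 0" unfolding D2e by (simp add: pcov_diff_left pcov_scale_left cL4)
    define c1 where "c1 = (v$1 * E + v$2 * C) / Dl"
    define d1 where "d1 = (v$1 * B - v$2 * A) / Dl"
    define c2 where "c2 = (v$3 * E + v$4 * C) / Dl"
    define d2 where "d2 = (v$3 * B - v$4 * A) / Dl"
    have Le: "L = (\<lambda>p. c1 * W1 p + d1 * D1 p + (c2 * W2 p + d2 * D2 p))"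
    proof
      fix p
      have "L p = (v$1 * alpha n K1 t p + v$2 * beta n K1 t p) + (v$3 * alpha n K2 t p + v$4 * beta n K2 t p)"
        unfolding L_def sum_4 a1 by simp
      also have "\<dots> = c1 * W1 p + d1 * D1 p + (c2 * W2 p + d2 * D2 p)"
        unfolding W1e W2e D1e D2e c1_def d1_def c2_def d2_def Dl_def
        using change_basis[OF Dnz] by presburger
      finally show "L p = c1 * W1 p + d1 * D1 p + (c2 * W2 p + d2 * D2 p)" .
    qed
    have sW: "pcov n W2 W1 = pcov n W1 W2" "pcov n D2 D1 = pcov n D1 D2" by (simp_all add: pcov_sym)
    have "pcov n D1 W1 = 0" "pcov n D1 W2 = 0" "pcov n D2 W1 = 0" "pcov n D2 W2 = 0"
      using cWD pcov_sym by metis+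
    then have eqs: "c1 * pcov n W1 W1 + c2 * pcov n W1 W2 = 0" "c1 * pcov n W1 W2 + c2 * pcov n W2 W2 = 0"
      "d1 * pcov n D1 D1 + d2 * pcov n D1 D2 = 0" "d1 * pcov n D1 D2 + d2 * pcov n D2 D2 = 0"
      using cW1 cW2 cD1 cD2 unfolding Le by (simp_all add: pcov_add_right pcov_scale_right cWD sW)
    have c0: "c1 = 0 \<and> c2 = 0" using lin2[OF eqs(1,2)] assms(6) unfolding pvar_def W1_def W2_def by simp
    have d0: "d1 = 0 \<and> d2 = 0" using lin2[OF eqs(3,4)] assms(7) unfolding pvar_def D1_def D2_def by simp
    have e1: "v$1 * E + v$2 * C = 0" "v$1 * B - v$2 * A = 0" "v$3 * E + v$4 * C = 0" "v$3 * B - v$4 * A = 0"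
      using c0 d0 Dnz unfolding c1_def c2_def d1_def d2_def Dl_def by auto
    have "v$1 * (A * E + B * C) = A * (v$1 * E + v$2 * C) + C * (v$1 * B - v$2 * A)" by (simp add: algebra_simps)
    then have v1: "v$1 = 0" using e1 Dnz by simp
    have "v$3 * (A * E + B * C) = A * (v$3 * E + v$4 * C) + C * (v$3 * B - v$4 * A)" by (simp add: algebra_simps)
    then have v3: "v$3 = 0" using e1 Dnz by simp
    have v2: "v$2 = 0" using e1 v1 pos by simp
    have v4: "v$4 = 0" using e1 v3 pos by simp
    show "v = 0" unfolding vec_eq_iff forall_4 using v1 v2 v3 v4 by simp
  qed
  then show ?thesis by (simp add: invertible_left_inverse)
qed

end
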